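(* For $n\ge1$ let $N^{(n)}\in\{0,1,\dots\}$ with $N^{(n)}\to\infty$, and let $\bm\alpha^{(n)}=(\alpha^{(n)}_j)_{j\ge1}$, $\bm\beta^{(n)}=(\beta^{(n)}_j)_{j\ge1}$ be positive sequences with $\alpha^{(n)}_j\to\alpha_j>0$ and $\beta^{(n)}_j\to\beta_j>0$ as $n\to\infty$ for every $j$. Let $\bm\psi^{(n)}=(\psi^{(n)}_j)_{j\ge1}$ be Beta-Binomial transitions with parameters $(N^{(n)},\bm\alpha^{(n)},\bm\beta^{(n)})$. Then for every $j\ge1$ and every sequence $u_n\to u$ in $[0,1]$, $\psi^{(n)}_j(u_n,\cdot)\to\delta_{\Upsilon_j(u)}$ weakly, where $\Upsilon_j=F_{j+1}^{-1}\circ F_j$ with $F_j(v)=\mathcal I_v(\alpha_j,\beta_j)$.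
   Context: $\mathcal I_v(a,b)$ denotes the regularized incomplete Beta function, i.e. the distribution function of $\mathrm{Beta}(a,b)$ at $v$. Beta-Binomial transitions with parameters $(N,\bm\alpha,\bm\beta)$ ($N\in\{0,1,\dots\}$, $\bm\alpha,\bm\beta$ positive sequences) are the kernels $\psi_j(v,du)=\sum_{z=0}^N\mathrm{Beta}(du\mid\alpha_{j+1}+z,\beta_{j+1}+N-z)\binom Nz\Upsilon^{\bm\alpha,\bm\beta}_j(v)^z(1-\Upsilon^{\bm\alpha,\bm\beta}_j(v))^{N-z}$ where $\Upsilon^{\bm\alpha,\bm\beta}_j=G_{j+1}^{-1}\circ G_j$, $G_j(v)=\mathcal I_v(\alpha_j,\beta_j)$. *)

theory Defs
  imports "HOL-Probability.Probability"
begin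

definition beta_density :: "real \<Rightarrow> real \<Rightarrow> real \<Rightarrow> real" where
  "beta_density a b x =
     indicator {0<..<1} x * (x powr (a - 1) * (1 - x) powr (b - 1)) / Beta a b"

definition beta_measure :: "real \<Rightarrow> real \<Rightarrow> real measure" where
  "beta_measure a b = density lborel (\<lambda>x. ennreal (beta_density a b x))"

definition reg_inc_beta :: "real \<Rightarrow> real \<Rightarrow> real \<Rightarrow> real" where
  "reg_inc_beta v a b = measure (beta_measure a b) {..v}"

definition Gfun :: "(nat \<Rightarrow> real) \<Rightarrow> (nat \<Rightarrow> real) \<Rightarrow> nat \<Rightarrow> real \<Rightarrow> real" where
  "Gfun al bl j v = reg_inc_beta v (al j) (bl j)"

definition Upsilon :: "(nat \<Rightarrow> real) \<Rightarrow> (nat \<Rightarrow> real) \<Rightarrow> nat \<Rightarrow> real \<Rightarrow> real" where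
  "Upsilon al bl j v = the_inv_into {0..1} (Gfun al bl (Suc j)) (Gfun al bl j v)"

definition bb_kernel ::
    "nat \<Rightarrow> (nat \<Rightarrow> real) \<Rightarrow> (nat \<Rightarrow> real) \<Rightarrow> nat \<Rightarrow> real \<Rightarrow> real measure" where
  "bb_kernel N al bl j v =
     (let p = Upsilon al bl j v in
      density lborel (\<lambda>x. ennreal (\<Sum>z\<in>{0..N}.
         real (N choose z) * p ^ z * (1 - p) ^ (N - z) *
         beta_density (al (Suc j) + real z) (bl (Suc j) + real (N - z)) x)))"

end

theory Submission
  imports Defs
begin
definition bB :: "real \<Rightarrow> real \<Rightarrow> real \<Rightarrow> real" where
  "bB a b x = x powr (a - 1) * (1 - x) powr (b - 1)"

lemma bB_nonneg: "bB a b x \<ge> 0"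
  unfolding bB_def by simp

lemma bB_0 [simp]: "bB a b 0 = 0" and bB_1 [simp]: "bB a b 1 = 0"
  unfolding bB_def by simp_all

lemma bB_pos: "0 < x \<Longrightarrow> x < 1 \<Longrightarrow> bB a b x > 0"
  unfolding bB_def by simp

lemma Beta_pos: "a > 0 \<Longrightarrow> b > 0 \<Longrightarrow> Beta a b > (0::real)"
  unfolding Beta_def by simp

lemma bB_hasint: "a > 0 \<Longrightarrow> b > 0 \<Longrightarrow> (bB a b has_integral Beta a b) {0..1}"
  unfolding bB_def by (rule has_integral_Beta_real)

lemma bB_integrable: "a > 0 \<Longrightarrow> b > 0 \<Longrightarrow> 0 \<le> v \<Longrightarrow> w \<le> 1 \<Longrightarrow> bB a b integrable_on {v..w}"
  by (rule integrable_on_subinterval[OF has_integral_integrable[OF bB_hasint]]) auto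

lemma bB_shift: "0 < x \<Longrightarrow> x ^ k * bB a b x = bB (a + real k) b x"
proof -
  assume x: "0 < x"
  have "x ^ k = x powr real k" using x by (simp add: powr_realpow)
  moreover have "x powr real k * x powr (a - 1) = x powr (a + real k - 1)"
    by (simp add: powr_add[symmetric] algebra_simps)
  ultimately show ?thesis unfolding bB_def by (simp add: mult.assoc)
qed

lemma bB_moment_hasint:
  assumes "a > 0" "b > 0"
  shows "((\<lambda>x. x ^ k * bB a b x) has_integral Beta (a + real k) b) {0<..<1}"
proof -
  have "(bB (a + real k) b has_integral Beta (a + real k) b) {0<..<1}"
    using bB_hasint[of "a + real k" b] assms by (simp add: has_integral_Icc_iff_Ioo)
  then show ?thesis
    by (subst has_integral_cong[where g = "bB (a + real k) b"]) (auto simp: bB_shift)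
qed

lemma Beta_plus1: "a > 0 \<Longrightarrow> b > 0 \<Longrightarrow> Beta (a + 1) b = a / (a + b) * Beta a (b::real)"
proof -
  assume "a > 0" "b > 0"
  moreover have "a \<notin> \<int>\<^sub>\<le>\<^sub>0" using \<open>a > 0\<close> by (auto elim!: nonpos_Ints_cases)
  ultimately have "(a + b) * Beta (a + 1) b = a * Beta a b" by (intro Beta_plus1_left) auto
  with \<open>a > 0\<close> \<open>b > 0\<close> show ?thesis by (simp add: field_simps)
qed

lemma Beta_plus2: "a > 0 \<Longrightarrow> b > 0 \<Longrightarrow> Beta (a + 2) b = (a + 1) / (a + b + 1) * (a / (a + b)) * Beta a (b::real)"
proof -
  assume "a > 0" "b > 0"
  then have "Beta (a + 1 + 1) b = (a + 1) / (a + 1 + b) * Beta (a + 1) b" by (intro Beta_plus1) auto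
  also have "Beta (a + 1) b = a / (a + b) * Beta a b" using \<open>a > 0\<close> \<open>b > 0\<close> by (rule Beta_plus1)
  finally show ?thesis by (simp add: algebra_simps)
qed

lemma bB_total:
  assumes "a > 0" "b > 0"
  shows "((\<lambda>x. bB a b x / Beta a b) has_integral 1) {0<..<1}"
proof -
  have "(bB a b has_integral Beta a b) {0<..<1}"
    using bB_hasint[OF assms] by (simp add: has_integral_Icc_iff_Ioo)
  from has_integral_divide[OF this, of "Beta a b"] show ?thesis
    using Beta_pos[OF assms] by simp
qed

lemma bB_second:
  assumes "a > 0" "b > 0"
  shows "((\<lambda>x. (x - p)^2 * (bB a b x / Beta a b)) has_integral
      (a * (a + 1) / ((a + b) * (a + b + 1)) - 2 * p * (a / (a + b)) + p^2)) {0<..<1}"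
proof -
  have i2: "((\<lambda>x. x ^ 2 * bB a b x) has_integral Beta (a + 2) b) {0<..<1}"
    using bB_moment_hasint[OF assms, of 2] by simp
  have i1: "((\<lambda>x. x ^ 1 * bB a b x) has_integral Beta (a + 1) b) {0<..<1}"
    using bB_moment_hasint[OF assms, of 1] by simp
  have i0: "(bB a b has_integral Beta a b) {0<..<1}"
    using bB_hasint[OF assms] by (simp add: has_integral_Icc_iff_Ioo)
  have H: "((\<lambda>x. (x ^ 2 * bB a b x - (2 * p) * (x ^ 1 * bB a b x) + p^2 * bB a b x) / Beta a b) has_integral
        (Beta (a + 2) b - (2 * p) * Beta (a + 1) b + p^2 * Beta a b) / Beta a b) {0<..<1}"
    by (intro has_integral_divide has_integral_add has_integral_diff has_integral_mult_right i0 i1 i2)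
  have E: "(Beta (a + 2) b - (2 * p) * Beta (a + 1) b + p^2 * Beta a b) / Beta a b
      = a * (a + 1) / ((a + b) * (a + b + 1)) - 2 * p * (a / (a + b)) + p^2"
  proof -
    have "(Beta (a + 2) b - (2 * p) * Beta (a + 1) b + p^2 * Beta a b) / Beta a b =
       ((a + 1) / (a + b + 1) * (a / (a + b)) - 2 * p * (a / (a + b)) + p^2) * Beta a b / Beta a b"
      unfolding Beta_plus1[OF assms] Beta_plus2[OF assms] by (simp add: algebra_simps)
    also have "\<dots> = (a + 1) / (a + b + 1) * (a / (a + b)) - 2 * p * (a / (a + b)) + p^2"
      using Beta_pos[OF assms] by simp
    finally show ?thesis by (simp add: mult.commute)
  qed
  have F: "(x ^ 2 * bB a b x - (2 * p) * (x ^ 1 * bB a b x) + p^2 * bB a b x) / Beta a b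
      = (x - p)^2 * (bB a b x / Beta a b)" for x
    using Beta_pos[OF assms] by (simp add: field_simps power2_eq_square)
  show ?thesis using H unfolding E F .
qed



lemma dens_meas:
  fixes G :: "real \<Rightarrow> real"
  assumes "G \<in> borel_measurable borel"
  shows "(\<lambda>y. ennreal (indicator {0<..<1} y * G y)) \<in> borel_measurable lborel"
proof -
  have "(\<lambda>y. indicator {0<..<1} y * G y) \<in> borel_measurable borel"
    by (intro borel_measurable_times borel_measurable_indicator assms) (auto intro!: borel_open)
  then show ?thesis by simp
qed

lemma dens_ps:
  fixes G :: "real \<Rightarrow> real"
  assumes meas: "G \<in> borel_measurable borel" and nn: "\<And>y. 0 < y \<Longrightarrow> y < 1 \<Longrightarrow> G y \<ge> 0"
    and tot: "(G has_integral 1) {0<..<1}"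
  shows "prob_space (density lborel (\<lambda>y. ennreal (indicator {0<..<1} y * G y)))"
proof (rule prob_spaceI)
  have "emeasure (density lborel (\<lambda>y. ennreal (indicator {0<..<1} y * G y))) UNIV
      = (\<integral>\<^sup>+ y. ennreal (indicator {0<..<1} y * G y) * indicator UNIV y \<partial>lborel)"
    by (rule emeasure_density[OF dens_meas[OF meas]]) simp
  also have "\<dots> = (\<integral>\<^sup>+ y. ennreal (indicator {0<..<1} y * G y) \<partial>lborel)"
    by simp
  also have "\<dots> = 1"
    using nn_integral_has_integral_lebesgue[OF _ tot] nn by simp
  finally show "emeasure (density lborel (\<lambda>y. ennreal (indicator {0<..<1} y * G y)))
     (space (density lborel (\<lambda>y. ennreal (indicator {0<..<1} y * G y)))) = 1"
    by simp
qed

lemma dens_cheb: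
  fixes G :: "real \<Rightarrow> real"
  assumes meas: "G \<in> borel_measurable borel" and nn: "\<And>y. 0 < y \<Longrightarrow> y < 1 \<Longrightarrow> G y \<ge> 0"
    and tot: "(G has_integral 1) {0<..<1}"
    and sec: "((\<lambda>y. (y - p)^2 * G y) has_integral V) {0<..<1}"
    and d: "d > 0" and A: "A \<in> sets borel" and Ad: "\<And>y. y \<in> A \<Longrightarrow> d \<le> \<bar>y - p\<bar>"
  shows "measure (density lborel (\<lambda>y. ennreal (indicator {0<..<1} y * G y))) A \<le> V / d^2"
proof -
  let ?M = "density lborel (\<lambda>y. ennreal (indicator {0<..<1} y * G y))"
  interpret P: prob_space ?M by (rule dens_ps[OF meas nn tot])
  have sec': "((\<lambda>y. (y - p)^2 * G y / d^2) has_integral V / d^2) {0<..<1}"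
    by (rule has_integral_divide[OF sec])
  have V0: "V / d^2 \<ge> 0"
    by (rule has_integral_nonneg[OF sec']) (use nn in auto)
  have "emeasure ?M A = (\<integral>\<^sup>+ y. ennreal (indicator {0<..<1} y * G y) * indicator A y \<partial>lborel)"
    by (rule emeasure_density[OF dens_meas[OF meas]]) (use A in simp)
  also have "\<dots> \<le> (\<integral>\<^sup>+ y. ennreal (indicator {0<..<1} y * ((y - p)^2 * G y / d^2)) \<partial>lborel)"
  proof (rule nn_integral_mono)
    fix y
    show "ennreal (indicator {0<..<1} y * G y) * indicator A y
          \<le> ennreal (indicator {0<..<1} y * ((y - p)^2 * G y / d^2))"
    proof (cases "y \<in> A \<and> y \<in> {0<..<1}")
      case True
      then have g: "G y \<ge> 0" using nn by auto
      have "d^2 \<le> (y - p)^2"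
        using power_mono[of d "\<bar>y - p\<bar>" 2] Ad[of y] True d by simp
      then have "G y * d^2 \<le> G y * (y - p)^2" using g by (intro mult_left_mono) auto
      then have "G y \<le> (y - p)^2 * G y / d^2" using d by (simp add: field_simps)
      then show ?thesis using True by (auto intro: ennreal_leI)
    next
      case False
      then show ?thesis by (auto simp: indicator_def)
    qed
  qed
  also have "\<dots> = ennreal (V / d^2)"
    using nn_integral_has_integral_lebesgue[OF _ sec'] nn d by simp
  finally have "ennreal (measure ?M A) \<le> ennreal (V / d^2)"
    by (simp add: P.emeasure_eq_measure)
  then show ?thesis using V0 by (simp add: ennreal_le_iff)
qed

lemma beta_measure_eq:
  "beta_measure a b = density lborel (\<lambda>y. ennreal (indicator {0<..<1} y * (bB a b y / Beta a b)))"
  unfolding beta_measure_def beta_density_def bB_def by simp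

lemma bB_meas [measurable]: "bB a b \<in> borel_measurable borel"
  unfolding bB_def by measurable

lemma beta_ps: "a > 0 \<Longrightarrow> b > 0 \<Longrightarrow> prob_space (beta_measure a b)"
  unfolding beta_measure_eq
proof (rule dens_ps)
  fix y :: real
  assume "a > 0" "b > 0"
  then show "0 \<le> bB a b y / Beta a b" using Beta_pos[of a b] bB_nonneg[of a b y] by simp
qed (auto simp: bB_total)

lemma sets_beta_measure [simp]: "sets (beta_measure a b) = sets borel"
  unfolding beta_measure_def by simp

definition clamp01 :: "real \<Rightarrow> real" where "clamp01 v = max 0 (min v 1)"

lemma reg_inc_beta_eq:
  assumes a: "a > 0" and b: "b > 0"
  shows "reg_inc_beta v a b = integral {0..clamp01 v} (bB a b) / Beta a b"
proof -
  let ?c = "clamp01 v"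
  interpret P: prob_space "beta_measure a b" by (rule beta_ps[OF a b])
  have c: "0 \<le> ?c" "?c \<le> 1" unfolding clamp01_def by auto
  have hi: "((\<lambda>y. bB a b y / Beta a b) has_integral integral {0..?c} (bB a b) / Beta a b) {0..?c}"
    by (intro has_integral_divide integrable_integral bB_integrable a b c order_refl)
  have "emeasure (beta_measure a b) {..v}
     = (\<integral>\<^sup>+ y. ennreal (indicator {0<..<1} y * (bB a b y / Beta a b)) * indicator {..v} y \<partial>lborel)"
    unfolding beta_measure_eq by (rule emeasure_density) (auto intro: dens_meas)
  also have "\<dots> = (\<integral>\<^sup>+ y. ennreal (indicator {0..?c} y * (bB a b y / Beta a b)) \<partial>lborel)"
  proof (rule nn_integral_cong)
    fix y :: real
    show "ennreal (indicator {0<..<1} y * (bB a b y / Beta a b)) * indicator {..v} y =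
          ennreal (indicator {0..?c} y * (bB a b y / Beta a b))"
    proof (cases "y = 0 \<or> y = 1")
      case True then show ?thesis by (auto simp: indicator_def)
    next
      case False then show ?thesis by (auto simp: indicator_def clamp01_def)
    qed
  qed
  also have "\<dots> = ennreal (integral {0..?c} (bB a b) / Beta a b)"
  proof (rule nn_integral_has_integral_lebesgue[OF _ hi])
    fix x show "0 \<le> bB a b x / Beta a b" using bB_nonneg[of a b x] Beta_pos[OF a b] by simp
  qed
  moreover have "integral {0..?c} (bB a b) / Beta a b \<ge> 0"
    by (intro divide_nonneg_pos integral_nonneg bB_integrable a b c bB_nonneg Beta_pos order_refl)
  ultimately have "measure (beta_measure a b) {..v} = integral {0..?c} (bB a b) / Beta a b"
    using P.emeasure_eq_measure by simp
  then show ?thesis unfolding reg_inc_beta_def .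
qed



lemma pos_not_nonpos_Int: "(a::real) > 0 \<Longrightarrow> a \<notin> \<int>\<^sub>\<le>\<^sub>0"
  by (auto elim!: nonpos_Ints_cases)

lemma Fb_mono:
  assumes "a > 0" "b > 0" "v \<le> w"
  shows "reg_inc_beta v a b \<le> reg_inc_beta w a b"
proof -
  interpret P: prob_space "beta_measure a b" by (rule beta_ps) (use assms in auto)
  show ?thesis unfolding reg_inc_beta_def
    by (rule P.finite_measure_mono) (use assms in auto)
qed

lemma Fb_range:
  assumes "a > 0" "b > 0"
  shows "0 \<le> reg_inc_beta v a b" "reg_inc_beta v a b \<le> 1"
proof -
  interpret P: prob_space "beta_measure a b" by (rule beta_ps) (use assms in auto)
  show "0 \<le> reg_inc_beta v a b" "reg_inc_beta v a b \<le> 1" unfolding reg_inc_beta_def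
    by (auto intro: P.prob_le_1)
qed

lemma Fb_0:
  assumes "a > 0" "b > 0" "v \<le> 0"
  shows "reg_inc_beta v a b = 0"
proof -
  have "clamp01 v = 0" using assms unfolding clamp01_def by auto
  then show ?thesis using reg_inc_beta_eq[OF assms(1,2)] by simp
qed

lemma Fb_1:
  assumes "a > 0" "b > 0" "v \<ge> 1"
  shows "reg_inc_beta v a b = 1"
proof -
  have "clamp01 v = 1" using assms unfolding clamp01_def by auto
  then show ?thesis using reg_inc_beta_eq[OF assms(1,2)] integral_unique[OF bB_hasint[OF assms(1,2)]]
      Beta_pos[OF assms(1,2)] by simp
qed

lemma integral_bB_pos:
  assumes a: "a > 0" and b: "b > 0" and vw: "0 \<le> v" "v < w" "w \<le> 1"
  shows "integral {v..w} (bB a b) > 0"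
proof -
  define v1 where "v1 = (3 * v + w) / 4"
  define w1 where "w1 = (v + 3 * w) / 4"
  have v1w1: "0 < v1" "v1 < w1" "w1 < 1" "v \<le> v1" "w1 \<le> w"
    using vw unfolding v1_def w1_def by auto
  have I1: "integral {v1..w1} (bB a b) \<ge> 0"
    by (intro integral_nonneg bB_integrable a b bB_nonneg) (use v1w1 in auto)
  have "integral {v1..w1} (bB a b) \<noteq> 0"
  proof
    assume 0: "integral {v1..w1} (bB a b) = 0"
    have hi: "(bB a b has_integral 0) (cbox v1 w1)"
      using integrable_integral[OF bB_integrable[OF a b, of v1 w1]] v1w1 0 by (simp add: cbox_interval)
    have cont: "continuous_on (cbox v1 w1) (bB a b)"
      unfolding bB_def cbox_interval using v1w1
      by (intro continuous_intros) auto
    have "bB a b ((v1 + w1) / 2) = 0"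
      by (rule has_integral_0_cbox_imp_0[OF cont _ hi]) (use v1w1 in \<open>auto simp: bB_nonneg box_real\<close>)
    moreover have "bB a b ((v1 + w1) / 2) > 0" by (rule bB_pos) (use v1w1 in auto)
    ultimately show False by simp
  qed
  with I1 have "integral {v1..w1} (bB a b) > 0" by simp
  also have "integral {v1..w1} (bB a b) \<le> integral {v..w} (bB a b)"
    by (intro integral_subset_le bB_integrable a b) (use v1w1 vw in \<open>auto simp: bB_nonneg\<close>)
  finally show ?thesis .
qed

lemma Fb_strict:
  assumes a: "a > 0" and b: "b > 0" and vw: "0 \<le> v" "v < w" "w \<le> 1"
  shows "reg_inc_beta v a b < reg_inc_beta w a b"
proof -
  have cv: "clamp01 v = v" "clamp01 w = w" using vw unfolding clamp01_def by auto
  have "integral {0..v} (bB a b) + integral {v..w} (bB a b) = integral {0..w} (bB a b)"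
    by (rule Henstock_Kurzweil_Integration.integral_combine) (use vw a b in \<open>auto intro!: bB_integrable\<close>)
  then have "integral {0..v} (bB a b) < integral {0..w} (bB a b)"
    using integral_bB_pos[OF a b vw] by linarith
  then show ?thesis
    unfolding reg_inc_beta_eq[OF a b] cv using Beta_pos[OF a b] by (simp add: divide_strict_right_mono)
qed

lemma Fb_cont:
  assumes a: "a > 0" and b: "b > 0"
  shows "isCont (\<lambda>v. reg_inc_beta v a b) x"
proof -
  have c1: "continuous_on {0..1} (\<lambda>x. integral {0..x} (bB a b))"
    by (intro indefinite_integral_continuous_1 bB_integrable a b) auto
  have c2: "continuous_on UNIV clamp01"
    unfolding clamp01_def by (intro continuous_intros)
  have "continuous_on UNIV (\<lambda>v. integral {0..clamp01 v} (bB a b))"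
    by (rule continuous_on_compose2[OF c1 c2]) (auto simp: clamp01_def)
  then have "continuous_on UNIV (\<lambda>v. integral {0..clamp01 v} (bB a b) / Beta a b)"
    by (intro continuous_intros) (use Beta_pos[OF a b] in auto)
  then have "isCont (\<lambda>v. integral {0..clamp01 v} (bB a b) / Beta a b) x"
    by (simp add: continuous_on_eq_continuous_at)
  then show ?thesis unfolding reg_inc_beta_eq[OF a b] .
qed

lemma bB_le:
  assumes "0 \<le> x" "x \<le> 1" "c \<le> a" "d \<le> b"
  shows "bB a b x \<le> bB c d x"
  unfolding bB_def using assms
  by (intro mult_mono powr_mono') auto

lemma bB_tendsto:
  assumes "an \<longlonglongrightarrow> a" "bn \<longlonglongrightarrow> b"
  shows "(\<lambda>n. bB (an n) (bn n) x) \<longlonglongrightarrow> bB a b x"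
proof (cases "x = 0 \<or> x = 1")
  case True
  then show ?thesis unfolding bB_def by auto
next
  case False
  then show ?thesis unfolding bB_def
    by (intro tendsto_intros assms) auto
qed

lemma Beta_tendsto:
  fixes an bn :: "nat \<Rightarrow> real"
  assumes "an \<longlonglongrightarrow> a" "bn \<longlonglongrightarrow> b" "a > 0" "b > 0"
  shows "(\<lambda>n. Beta (an n) (bn n)) \<longlonglongrightarrow> Beta a b"
proof -
  have g0: "Gamma (a + b) > (0::real)" by (rule Gamma_real_pos) (use assms in simp)
  then have g: "Gamma (a + b) \<noteq> (0::real)" by simp
  show ?thesis unfolding Beta_def
    by (intro tendsto_intros pos_not_nonpos_Int assms g) (use assms in auto)
qed

lemma Fb_conv:
  fixes an bn :: "nat \<Rightarrow> real"
  assumes an: "an \<longlonglongrightarrow> a" and bn: "bn \<longlonglongrightarrow> b" and a: "a > 0" and b: "b > 0"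
    and anp: "\<And>n. an n > 0" and bnp: "\<And>n. bn n > 0"
  shows "(\<lambda>n. reg_inc_beta v (an n) (bn n)) \<longlonglongrightarrow> reg_inc_beta v a b"
proof -
  define c where "c = clamp01 v"
  have c: "0 \<le> c" "c \<le> 1" unfolding c_def clamp01_def by auto
  have "eventually (\<lambda>n. an n > a / 2) sequentially" using an a by (intro order_tendstoD) auto
  moreover have "eventually (\<lambda>n. bn n > b / 2) sequentially" using bn b by (intro order_tendstoD) auto
  ultimately obtain K where K: "\<And>n. n \<ge> K \<Longrightarrow> an n > a / 2 \<and> bn n > b / 2"
    unfolding eventually_sequentially by (metis (full_types) le_trans nat_le_linear)
  have "(\<lambda>k. integral {0..c} (bB (an (k + K)) (bn (k + K)))) \<longlonglongrightarrow> integral {0..c} (bB a b)"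
  proof (rule dominated_convergence(2))
    show "\<And>k. bB (an (k + K)) (bn (k + K)) integrable_on {0..c}"
      by (intro bB_integrable anp bnp c order_refl)
    show "bB (a / 2) (b / 2) integrable_on {0..c}"
      by (intro bB_integrable c order_refl) (use a b in auto)
    show "norm (bB (an (k + K)) (bn (k + K)) x) \<le> bB (a / 2) (b / 2) x" if "x \<in> {0..c}" for k x
    proof -
      have "bB (an (k + K)) (bn (k + K)) x \<le> bB (a / 2) (b / 2) x"
        by (rule bB_le) (use that c K[of "k + K"] in auto)
      then show ?thesis by (simp add: bB_nonneg)
    qed
    show "(\<lambda>k. bB (an (k + K)) (bn (k + K)) x) \<longlonglongrightarrow> bB a b x" if "x \<in> {0..c}" for x
      by (intro bB_tendsto LIMSEQ_ignore_initial_segment an bn)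
  qed
  then have i: "(\<lambda>n. integral {0..c} (bB (an n) (bn n))) \<longlonglongrightarrow> integral {0..c} (bB a b)"
    by (rule LIMSEQ_offset)
  have "(\<lambda>n. integral {0..c} (bB (an n) (bn n)) / Beta (an n) (bn n)) \<longlonglongrightarrow> integral {0..c} (bB a b) / Beta a b"
    by (intro tendsto_divide i Beta_tendsto an bn a b) (use Beta_pos[OF a b] in auto)
  then show ?thesis
    unfolding reg_inc_beta_eq[OF a b] reg_inc_beta_eq[OF anp bnp] c_def .
qed



lemma inv_props:
  assumes a: "a > 0" and b: "b > 0" and t: "t \<in> {0..1}"
  shows "the_inv_into {0..1} (\<lambda>v. reg_inc_beta v a b) t \<in> {0..1}"
    and "reg_inc_beta (the_inv_into {0..1} (\<lambda>v. reg_inc_beta v a b) t) a b = t"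
proof -
  have inj: "inj_on (\<lambda>v. reg_inc_beta v a b) {0..1}"
  proof (rule inj_onI)
    fix x y :: real assume xy: "x \<in> {0..1}" "y \<in> {0..1}" "reg_inc_beta x a b = reg_inc_beta y a b"
    show "x = y"
    proof (rule ccontr)
      assume "x \<noteq> y"
      then consider "x < y" | "y < x" by linarith
      then show False
        using Fb_strict[OF a b, of x y] Fb_strict[OF a b, of y x] xy by cases auto
    qed
  qed
  have cont: "continuous_on {0..1} (\<lambda>v. reg_inc_beta v a b)"
    by (intro continuous_at_imp_continuous_on ballI Fb_cont a b)
  obtain x where x: "0 \<le> x" "x \<le> 1" "reg_inc_beta x a b = t"
    using IVT'[of "\<lambda>v. reg_inc_beta v a b" 0 t 1] cont t Fb_0[OF a b] Fb_1[OF a b] by auto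
  then have im: "t \<in> (\<lambda>v. reg_inc_beta v a b) ` {0..1}" by force
  show "the_inv_into {0..1} (\<lambda>v. reg_inc_beta v a b) t \<in> {0..1}"
    by (rule the_inv_into_into[OF inj im]) simp
  show "reg_inc_beta (the_inv_into {0..1} (\<lambda>v. reg_inc_beta v a b) t) a b = t"
    using f_the_inv_into_f[OF inj im] by simp
qed

lemma mono_lim:
  fixes Gn :: "nat \<Rightarrow> real \<Rightarrow> real" and G :: "real \<Rightarrow> real"
  assumes mono: "\<And>n x y. x \<le> y \<Longrightarrow> Gn n x \<le> Gn n y"
    and conv: "\<And>w. (\<lambda>n. Gn n w) \<longlonglongrightarrow> G w"
    and cont: "isCont G u" and un: "un \<longlonglongrightarrow> u"
  shows "(\<lambda>n. Gn n (un n)) \<longlonglongrightarrow> G u"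
proof (rule order_tendstoI)
  fix y assume y: "y < G u"
  have "eventually (\<lambda>w. y < G w) (at u)"
    using order_tendstoD(1)[OF cont[unfolded isCont_def] y] .
  then obtain d where d: "d > 0" "\<And>w. w \<noteq> u \<Longrightarrow> dist w u < d \<Longrightarrow> y < G w"
    unfolding eventually_at by auto
  define w where "w = u - d / 2"
  have "y < G w" using d unfolding w_def by (intro d(2)) (auto simp: dist_real_def)
  then have e1: "eventually (\<lambda>n. y < Gn n w) sequentially"
    by (rule order_tendstoD(1)[OF conv])
  have e2: "eventually (\<lambda>n. w < un n) sequentially"
    by (rule order_tendstoD(1)[OF un]) (use d in \<open>simp add: w_def\<close>)
  show "eventually (\<lambda>n. y < Gn n (un n)) sequentially"
    using e1 e2
  proof eventually_elim
    case (elim n)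
    then show ?case using mono[of w "un n" n] by linarith
  qed
next
  fix y assume y: "y > G u"
  have "eventually (\<lambda>w. y > G w) (at u)"
    using order_tendstoD(2)[OF cont[unfolded isCont_def] y] .
  then obtain d where d: "d > 0" "\<And>w. w \<noteq> u \<Longrightarrow> dist w u < d \<Longrightarrow> y > G w"
    unfolding eventually_at by auto
  define w where "w = u + d / 2"
  have "y > G w" using d unfolding w_def by (intro d(2)) (auto simp: dist_real_def)
  then have e1: "eventually (\<lambda>n. y > Gn n w) sequentially"
    by (rule order_tendstoD(2)[OF conv])
  have e2: "eventually (\<lambda>n. w > un n) sequentially"
    by (rule order_tendstoD(2)[OF un]) (use d in \<open>simp add: w_def\<close>)
  show "eventually (\<lambda>n. y > Gn n (un n)) sequentially"
    using e1 e2
  proof eventually_elim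
    case (elim n)
    then show ?case using mono[of "un n" w n] by linarith
  qed
qed

lemma inv_lim:
  fixes Hn :: "nat \<Rightarrow> real \<Rightarrow> real" and H :: "real \<Rightarrow> real"
  assumes mono: "\<And>n x y. x \<le> y \<Longrightarrow> Hn n x \<le> Hn n y"
    and conv: "\<And>w. (\<lambda>n. Hn n w) \<longlonglongrightarrow> H w"
    and strict: "\<And>v w. 0 \<le> v \<Longrightarrow> v < w \<Longrightarrow> w \<le> 1 \<Longrightarrow> H v < H w"
    and qn: "\<And>n. qn n \<in> {0..1}" and c: "c \<in> {0..1}"
    and Hq: "\<And>n. Hn n (qn n) = tn n" and Hc: "H c = t" and tn: "tn \<longlonglongrightarrow> t"
  shows "qn \<longlonglongrightarrow> c"
proof (rule order_tendstoI)
  fix y assume y: "y < c"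
  show "eventually (\<lambda>n. y < qn n) sequentially"
  proof (cases "y < 0")
    case True
    have "y < qn n" for n using qn[of n] True by auto
    then show ?thesis by simp
  next
    case False
    then have "H y < t" using strict[of y c] y c Hc by auto
    define m where "m = (H y + t) / 2"
    have e1: "eventually (\<lambda>n. Hn n y < m) sequentially"
      by (rule order_tendstoD(2)[OF conv]) (use \<open>H y < t\<close> in \<open>simp add: m_def\<close>)
    have e2: "eventually (\<lambda>n. m < tn n) sequentially"
      by (rule order_tendstoD(1)[OF tn]) (use \<open>H y < t\<close> in \<open>simp add: m_def\<close>)
    show ?thesis using e1 e2
    proof eventually_elim
      case (elim n)
      show "y < qn n"
      proof (rule ccontr)
        assume "\<not> y < qn n"
        then have "Hn n (qn n) \<le> Hn n y" using mono by simp
        then show False using elim Hq[of n] by simp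
      qed
    qed
  qed
next
  fix y assume y: "y > c"
  show "eventually (\<lambda>n. y > qn n) sequentially"
  proof (cases "y > 1")
    case True
    have "y > qn n" for n using qn[of n] True by auto
    then show ?thesis by simp
  next
    case False
    then have "H y > t" using strict[of c y] y c Hc by auto
    define m where "m = (H y + t) / 2"
    have e1: "eventually (\<lambda>n. Hn n y > m) sequentially"
      by (rule order_tendstoD(1)[OF conv]) (use \<open>H y > t\<close> in \<open>simp add: m_def\<close>)
    have e2: "eventually (\<lambda>n. m > tn n) sequentially"
      by (rule order_tendstoD(2)[OF tn]) (use \<open>H y > t\<close> in \<open>simp add: m_def\<close>)
    show ?thesis using e1 e2
    proof eventually_elim
      case (elim n)
      show "y > qn n"
      proof (rule ccontr)
        assume "\<not> y > qn n"
        then have "Hn n y \<le> Hn n (qn n)" using mono by simp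
        then show False using elim Hq[of n] by simp
      qed
    qed
  qed
qed



definition Gk :: "nat \<Rightarrow> real \<Rightarrow> real \<Rightarrow> real \<Rightarrow> real \<Rightarrow> real" where
  "Gk N a b p y = (\<Sum>z\<in>{0..N}. Bernstein N z p *
       (bB (a + real z) (b + real (N - z)) y / Beta (a + real z) (b + real (N - z))))"

definition Vf :: "real \<Rightarrow> real \<Rightarrow> real \<Rightarrow> real \<Rightarrow> real" where
  "Vf N a b p = (N * (N - 1) * p^2 + (2 * a + 2) * N * p + a * (a + 1)) / ((a + b + N) * (a + b + N + 1))
     - 2 * p * (a + N * p) / (a + b + N) + p^2"

lemma Upsilon_eq:
  "Upsilon al bl j v = the_inv_into {0..1} (\<lambda>w. reg_inc_beta w (al (Suc j)) (bl (Suc j))) (reg_inc_beta v (al j) (bl j))"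
  by (simp add: Upsilon_def Gfun_def[abs_def])

lemma kernel_eq:
  "bb_kernel N al bl j v = density lborel (\<lambda>y. ennreal (indicator {0<..<1} y *
      Gk N (al (Suc j)) (bl (Suc j)) (Upsilon al bl j v) y))"
  unfolding bb_kernel_def Let_def
proof (intro arg_cong[where f = "density lborel"] ext arg_cong[where f = ennreal])
  fix y :: real
  show "(\<Sum>z\<in>{0..N}. real (N choose z) * Upsilon al bl j v ^ z * (1 - Upsilon al bl j v) ^ (N - z) *
          beta_density (al (Suc j) + real z) (bl (Suc j) + real (N - z)) y) =
        indicator {0<..<1} y * Gk N (al (Suc j)) (bl (Suc j)) (Upsilon al bl j v) y"
    by (cases "y \<in> {0<..<1}") (simp_all add: Gk_def beta_density_def Bernstein_def bB_def)
qed

lemma Gk_meas: "Gk N a b p \<in> borel_measurable borel"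
  unfolding Gk_def by measurable

lemma Gk_nonneg:
  assumes "a > 0" "b > 0" "p \<in> {0..1}"
  shows "Gk N a b p y \<ge> 0"
  unfolding Gk_def using assms
  by (intro sum_nonneg mult_nonneg_nonneg Bernstein_nonneg divide_nonneg_pos bB_nonneg Beta_pos) auto

lemma Gk_total:
  assumes "a > 0" "b > 0"
  shows "(Gk N a b p has_integral 1) {0<..<1}"
proof -
  have "((\<lambda>y. Gk N a b p y) has_integral (\<Sum>z\<in>{0..N}. Bernstein N z p * 1)) {0<..<1}"
    unfolding Gk_def
    by (intro has_integral_sum finite_atLeastAtMost has_integral_mult_right bB_total) (use assms in auto)
  then show ?thesis by (simp add: atLeast0AtMost)
qed

lemma Vf_sum:
  fixes a b p :: real
  assumes "a > 0" "b > 0"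
  shows "(\<Sum>z\<in>{0..N}. Bernstein N z p *
      ((a + real z) * (a + real z + 1) / ((a + real z + (b + real (N - z))) * (a + real z + (b + real (N - z)) + 1))
       - 2 * p * ((a + real z) / (a + real z + (b + real (N - z)))) + p^2)) = Vf (real N) a b p"
proof -
  define S where "S = a + b + real N"
  define A where "A = 1 / (S * (S + 1))"
  define B where "B = 1 / S"
  have "(\<Sum>z\<in>{0..N}. Bernstein N z p *
      ((a + real z) * (a + real z + 1) / ((a + real z + (b + real (N - z))) * (a + real z + (b + real (N - z)) + 1))
       - 2 * p * ((a + real z) / (a + real z + (b + real (N - z)))) + p^2))
     = (\<Sum>z\<le>N. A * (real z * (real z - 1) * Bernstein N z p) + ((2 * a + 2) * A - 2 * p * B) * (real z * Bernstein N z p)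
          + (a * (a + 1) * A - 2 * p * a * B + p^2) * Bernstein N z p)"
  proof (rule sum.cong)
    fix z assume "z \<in> {..N}"
    then have eq: "a + real z + (b + real (N - z)) = S" by (simp add: S_def of_nat_diff)
    have S0: "S > 0" using assms by (simp add: S_def)
    show "Bernstein N z p *
      ((a + real z) * (a + real z + 1) / ((a + real z + (b + real (N - z))) * (a + real z + (b + real (N - z)) + 1))
       - 2 * p * ((a + real z) / (a + real z + (b + real (N - z)))) + p^2) =
      A * (real z * (real z - 1) * Bernstein N z p) + ((2 * a + 2) * A - 2 * p * B) * (real z * Bernstein N z p)
          + (a * (a + 1) * A - 2 * p * a * B + p^2) * Bernstein N z p"
    proof -
      have d1: "x / (S * (S + 1)) = x * A" for x by (simp add: A_def)
      have d2: "x / S = x * B" for x by (simp add: B_def)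
      show ?thesis unfolding eq d1 d2 by (simp add: algebra_simps)
    qed
  qed (simp add: atLeast0AtMost)
  also have "\<dots> = A * (\<Sum>z\<le>N. real z * (real z - 1) * Bernstein N z p)
        + ((2 * a + 2) * A - 2 * p * B) * (\<Sum>z\<le>N. real z * Bernstein N z p)
        + (a * (a + 1) * A - 2 * p * a * B + p^2) * (\<Sum>z\<le>N. Bernstein N z p)"
    by (simp only: sum.distrib sum_distrib_left)
  also have "\<dots> = A * (real N * (real N - 1) * p^2) + ((2 * a + 2) * A - 2 * p * B) * (real N * p)
          + (a * (a + 1) * A - 2 * p * a * B + p^2)"
    by (simp only: sum_kk_Bernstein sum_k_Bernstein sum_Bernstein mult_1_right)
  also have "\<dots> = Vf (real N) a b p"
  proof -
    have d1: "x / (S * (S + 1)) = x * A" for x by (simp add: A_def)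
    have d2: "x / S = x * B" for x by (simp add: B_def)
    show ?thesis unfolding Vf_def S_def[symmetric] d1 d2 by (simp add: algebra_simps)
  qed
  finally show ?thesis .
qed



lemma Gk_second:
  assumes a: "a > 0" and b: "b > 0"
  shows "((\<lambda>y. (y - p)^2 * Gk N a b p y) has_integral Vf (real N) a b p) {0<..<1}"
proof -
  have "((\<lambda>y. \<Sum>z\<in>{0..N}. Bernstein N z p *
        ((y - p)^2 * (bB (a + real z) (b + real (N - z)) y / Beta (a + real z) (b + real (N - z)))))
     has_integral (\<Sum>z\<in>{0..N}. Bernstein N z p *
      ((a + real z) * (a + real z + 1) / ((a + real z + (b + real (N - z))) * (a + real z + (b + real (N - z)) + 1))
       - 2 * p * ((a + real z) / (a + real z + (b + real (N - z)))) + p^2))) {0<..<1}"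
    by (intro has_integral_sum finite_atLeastAtMost has_integral_mult_right bB_second) (use a b in auto)
  then have "((\<lambda>y. \<Sum>z\<in>{0..N}. Bernstein N z p *
        ((y - p)^2 * (bB (a + real z) (b + real (N - z)) y / Beta (a + real z) (b + real (N - z)))))
     has_integral Vf (real N) a b p) {0<..<1}"
    unfolding Vf_sum[OF a b] .
  moreover have "(\<Sum>z\<in>{0..N}. Bernstein N z p *
        ((y - p)^2 * (bB (a + real z) (b + real (N - z)) y / Beta (a + real z) (b + real (N - z)))))
      = (y - p)^2 * Gk N a b p y" for y
    unfolding Gk_def sum_distrib_left by (simp add: mult_ac)
  ultimately show ?thesis by simp
qed

lemma Vf_eq:
  assumes N: "N > 0" and s: "a + b > 0"
  shows "Vf N a b p = (2 * p * (1 - p) * (1 / N) + (a * (a + 1) - 2 * p * a * (a + b + 1) + p^2 * (a + b) * (a + b + 1)) * (1 / N)^2)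
      / ((1 + (a + b) * (1 / N)) * (1 + (a + b) * (1 / N) + 1 / N))"
proof -
  define S where "S = a + b + N"
  define h where "h = 1 / N"
  define K where "K = a * (a + 1) - 2 * p * a * (a + b + 1) + p^2 * (a + b) * (a + b + 1)"
  define Q where "Q = 2 * p * (1 - p) * N + K"
  have S0: "S > 0" using N s by (simp add: S_def)
  have h0: "h > 0" using N by (simp add: h_def)
  have Nh: "N * h = 1" using N by (simp add: h_def)
  have "Vf N a b p = (N * (N - 1) * p^2 + (2 * a + 2) * N * p + a * (a + 1)) / (S * (S + 1))
     - 2 * p * (a + N * p) / S + p^2"
    unfolding Vf_def S_def ..
  also have "\<dots> = ((N * (N - 1) * p^2 + (2 * a + 2) * N * p + a * (a + 1)) - 2 * p * (a + N * p) * (S + 1)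
      + p^2 * (S * (S + 1))) / (S * (S + 1))"
  proof -
    define D where "D = S * (S + 1)"
    have D0: "D > 0" using S0 by (simp add: D_def)
    have e1: "2 * p * (a + N * p) / S = (2 * p * (a + N * p) * (S + 1)) / D"
      using S0 by (simp add: D_def)
    have e2: "p^2 = (p^2 * D) / D" using D0 by simp
    show ?thesis unfolding D_def[symmetric] e1
      by (subst e2) (simp only: diff_divide_distrib add_divide_distrib)
  qed
  also have "(N * (N - 1) * p^2 + (2 * a + 2) * N * p + a * (a + 1)) - 2 * p * (a + N * p) * (S + 1)
      + p^2 * (S * (S + 1)) = Q"
    unfolding Q_def K_def S_def by (simp add: power2_eq_square algebra_simps)
  also have "Q / (S * (S + 1)) = (Q * h^2) / ((S * h) * ((S + 1) * h))"
    using h0 S0 by (simp add: power2_eq_square)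
  also have "S * h = 1 + (a + b) * h" unfolding S_def using Nh by (simp add: algebra_simps)
  also have "(S + 1) * h = 1 + (a + b) * h + h" unfolding S_def using Nh by (simp add: algebra_simps)
  also have "Q * h^2 = 2 * p * (1 - p) * h + K * h^2"
  proof -
    have "Q * h^2 = 2 * p * (1 - p) * (N * h) * h + K * h^2"
      unfolding Q_def by (simp add: power2_eq_square algebra_simps)
    then show ?thesis unfolding Nh by simp
  qed
  finally show ?thesis unfolding h_def K_def .
qed

lemma Vf_tendsto:
  fixes Nn :: "nat \<Rightarrow> nat" and an bn pn :: "nat \<Rightarrow> real"
  assumes Nn: "filterlim Nn at_top sequentially"
    and an: "an \<longlonglongrightarrow> a0" and bn: "bn \<longlonglongrightarrow> b0" and pn: "pn \<longlonglongrightarrow> c"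
    and pos: "\<And>n. an n + bn n > 0"
  shows "(\<lambda>n. Vf (real (Nn n)) (an n) (bn n) (pn n)) \<longlonglongrightarrow> 0"
proof -
  have rN: "filterlim (\<lambda>n. real (Nn n)) at_top sequentially"
    by (rule filterlim_compose[OF filterlim_real_sequentially Nn])
  have h: "(\<lambda>n. 1 / real (Nn n)) \<longlonglongrightarrow> 0"
    using tendsto_inverse_0_at_top[OF rN] by (simp add: inverse_eq_divide)
  have "\<forall>P. eventually P at_top \<longrightarrow> eventually (\<lambda>x. P (Nn x)) sequentially"
    using Nn by (simp add: filterlim_iff)
  then have "eventually (\<lambda>x. Nn x > 0) sequentially"
    using eventually_gt_at_top[of "0::nat"] by blast
  then have ev: "eventually (\<lambda>n. real (Nn n) > 0) sequentially" by simp
  let ?F = "\<lambda>n. (2 * pn n * (1 - pn n) * (1 / real (Nn n)) + (an n * (an n + 1) - 2 * pn n * an n * (an n + bn n + 1)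
        + (pn n)^2 * (an n + bn n) * (an n + bn n + 1)) * (1 / real (Nn n))^2)
      / ((1 + (an n + bn n) * (1 / real (Nn n))) * (1 + (an n + bn n) * (1 / real (Nn n)) + 1 / real (Nn n)))"
  have "?F \<longlonglongrightarrow> (2 * c * (1 - c) * 0 + (a0 * (a0 + 1) - 2 * c * a0 * (a0 + b0 + 1)
        + c^2 * (a0 + b0) * (a0 + b0 + 1)) * 0^2) / ((1 + (a0 + b0) * 0) * (1 + (a0 + b0) * 0 + 0))"
    by (intro tendsto_intros an bn pn h) simp
  then have F: "?F \<longlonglongrightarrow> 0" by simp
  have "eventually (\<lambda>n. ?F n = Vf (real (Nn n)) (an n) (bn n) (pn n)) sequentially"
    using ev by eventually_elim (rule Vf_eq[symmetric], auto intro: pos)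
  from tendsto_cong[OF this] F show ?thesis by simp
qed



theorem mainTheorem11:
  fixes N :: "nat \<Rightarrow> nat"
    and al bl :: "nat \<Rightarrow> nat \<Rightarrow> real"
    and al_lim bl_lim :: "nat \<Rightarrow> real"
    and j :: nat
    and us :: "nat \<Rightarrow> real" and u :: real
  assumes N_lim: "filterlim N at_top sequentially"
    and al_pos: "\<And>n i. i \<ge> 1 \<Longrightarrow> al n i > 0"
    and bl_pos: "\<And>n i. i \<ge> 1 \<Longrightarrow> bl n i > 0"
    and al_lim_pos: "\<And>i. i \<ge> 1 \<Longrightarrow> al_lim i > 0"
    and bl_lim_pos: "\<And>i. i \<ge> 1 \<Longrightarrow> bl_lim i > 0"
    and al_conv: "\<And>i. i \<ge> 1 \<Longrightarrow> (\<lambda>n. al n i) \<longlonglongrightarrow> al_lim i"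
    and bl_conv: "\<And>i. i \<ge> 1 \<Longrightarrow> (\<lambda>n. bl n i) \<longlonglongrightarrow> bl_lim i"
    and j_ge: "j \<ge> 1"
    and us_range: "\<And>n. us n \<in> {0..1}"
    and u_range: "u \<in> {0..1}"
    and us_conv: "us \<longlonglongrightarrow> u"
  shows "weak_conv_m (\<lambda>n. bb_kernel (N n) (al n) (bl n) j (us n))
                     (return lborel (Upsilon al_lim bl_lim j u))"
proof -
  define a where "a = (\<lambda>n. al n (Suc j))"
  define b where "b = (\<lambda>n. bl n (Suc j))"
  define p where "p = (\<lambda>n. Upsilon (al n) (bl n) j (us n))"
  define c where "c = Upsilon al_lim bl_lim j u"
  define V where "V = (\<lambda>n. Vf (real (N n)) (a n) (b n) (p n))"
  have s1: "Suc j \<ge> 1" by simp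
  have apos: "\<And>n. a n > 0" and bpos: "\<And>n. b n > 0"
    unfolding a_def b_def using al_pos[OF s1] bl_pos[OF s1] by auto
  have ajpos: "\<And>n. al n j > 0" and bjpos: "\<And>n. bl n j > 0"
    using al_pos[OF j_ge] bl_pos[OF j_ge] by auto
  have a0: "al_lim (Suc j) > 0" "bl_lim (Suc j) > 0" "al_lim j > 0" "bl_lim j > 0"
    using al_lim_pos[OF s1] bl_lim_pos[OF s1] al_lim_pos[OF j_ge] bl_lim_pos[OF j_ge] by auto
  have trange: "reg_inc_beta (us n) (al n j) (bl n j) \<in> {0..1}" for n
    using Fb_range[OF ajpos bjpos] by auto
  have trange0: "reg_inc_beta u (al_lim j) (bl_lim j) \<in> {0..1}"
    using Fb_range[OF a0(3,4)] by auto
  have prange: "p n \<in> {0..1}" and Hp: "reg_inc_beta (p n) (a n) (b n) = reg_inc_beta (us n) (al n j) (bl n j)" for n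
    unfolding p_def Upsilon_eq a_def b_def
    using inv_props[OF apos[unfolded a_def] bpos[unfolded b_def] trange] by auto
  have crange: "c \<in> {0..1}" and Hc: "reg_inc_beta c (al_lim (Suc j)) (bl_lim (Suc j)) = reg_inc_beta u (al_lim j) (bl_lim j)"
    unfolding c_def Upsilon_eq
    using inv_props[OF a0(1,2) trange0] by auto
  have tconv: "(\<lambda>n. reg_inc_beta (us n) (al n j) (bl n j)) \<longlonglongrightarrow> reg_inc_beta u (al_lim j) (bl_lim j)"
  proof (rule mono_lim[where Gn = "\<lambda>n v. reg_inc_beta v (al n j) (bl n j)" and G = "\<lambda>v. reg_inc_beta v (al_lim j) (bl_lim j)"])
    show "\<And>n x y. x \<le> y \<Longrightarrow> reg_inc_beta x (al n j) (bl n j) \<le> reg_inc_beta y (al n j) (bl n j)"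
      by (rule Fb_mono[OF ajpos bjpos])
    show "\<And>w. (\<lambda>n. reg_inc_beta w (al n j) (bl n j)) \<longlonglongrightarrow> reg_inc_beta w (al_lim j) (bl_lim j)"
      by (rule Fb_conv[OF al_conv[OF j_ge] bl_conv[OF j_ge] a0(3,4) ajpos bjpos])
    show "isCont (\<lambda>v. reg_inc_beta v (al_lim j) (bl_lim j)) u"
      by (rule Fb_cont[OF a0(3,4)])
  qed (rule us_conv)
  have pconv: "p \<longlonglongrightarrow> c"
  proof (rule inv_lim[where Hn = "\<lambda>n v. reg_inc_beta v (a n) (b n)"
        and H = "\<lambda>v. reg_inc_beta v (al_lim (Suc j)) (bl_lim (Suc j))"])
    show "\<And>n x y. x \<le> y \<Longrightarrow> reg_inc_beta x (a n) (b n) \<le> reg_inc_beta y (a n) (b n)"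
      by (rule Fb_mono[OF apos bpos])
    show "\<And>w. (\<lambda>n. reg_inc_beta w (a n) (b n)) \<longlonglongrightarrow> reg_inc_beta w (al_lim (Suc j)) (bl_lim (Suc j))"
      unfolding a_def b_def
      by (rule Fb_conv[OF al_conv[OF s1] bl_conv[OF s1] a0(1,2)]) (use apos bpos in \<open>auto simp: a_def b_def\<close>)
    show "\<And>v w. 0 \<le> v \<Longrightarrow> v < w \<Longrightarrow> w \<le> 1 \<Longrightarrow>
        reg_inc_beta v (al_lim (Suc j)) (bl_lim (Suc j)) < reg_inc_beta w (al_lim (Suc j)) (bl_lim (Suc j))"
      by (rule Fb_strict[OF a0(1,2)])
  qed (use prange crange Hp Hc tconv in auto)
  have Vconv: "V \<longlonglongrightarrow> 0"
    unfolding V_def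
    by (rule Vf_tendsto[OF N_lim _ _ pconv, of _ "al_lim (Suc j)" _ "bl_lim (Suc j)"])
       (use apos bpos al_conv[OF s1] bl_conv[OF s1] in \<open>auto simp: a_def b_def intro: add_pos_pos\<close>)
  define M where "M = (\<lambda>n. density lborel (\<lambda>y. ennreal (indicator {0<..<1} y * Gk (N n) (a n) (b n) (p n) y)))"
  have Meq: "bb_kernel (N n) (al n) (bl n) j (us n) = M n" for n
    unfolding M_def kernel_eq a_def b_def p_def ..
  have Mps: "prob_space (M n)" for n
    unfolding M_def
    by (rule dens_ps[OF Gk_meas _ Gk_total[OF apos bpos]]) (rule Gk_nonneg[OF apos bpos prange])
  have cheb: "measure (M n) A \<le> V n / d^2" if "d > 0" "A \<in> sets borel" "\<And>y. y \<in> A \<Longrightarrow> d \<le> \<bar>y - p n\<bar>" for n d A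
    unfolding M_def V_def
    by (rule dens_cheb[OF Gk_meas _ Gk_total[OF apos bpos] Gk_second[OF apos bpos] that])
       (rule Gk_nonneg[OF apos bpos prange])
  have cdfret: "cdf (return lborel c) x = (if c \<le> x then 1 else 0)" for x
    unfolding cdf_def by (simp add: measure_return indicator_def)
  show ?thesis
    unfolding weak_conv_m_def weak_conv_def Meq c_def[symmetric]
  proof (intro allI impI)
    fix x assume cont: "isCont (cdf (return lborel c)) x"
    interpret R: prob_space "return lborel c" by (rule prob_space_return) simp
    interpret R: finite_borel_measure "return lborel c" by unfold_locales simp
    have "x \<noteq> c"
    proof
      assume "x = c"
      then have "measure (return lborel c) {c} = 0" using cont R.isCont_cdf by simp
      then show False by (simp add: measure_return)
    qed
    then consider "x < c" | "x > c" by linarith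
    then show "(\<lambda>n. cdf (M n) x) \<longlonglongrightarrow> cdf (return lborel c) x"
    proof cases
      case 1
      define d where "d = (c - x) / 2"
      have d: "d > 0" using 1 by (simp add: d_def)
      have ev: "eventually (\<lambda>n. x + d < p n) sequentially"
        by (rule order_tendstoD(1)[OF pconv]) (use 1 in \<open>simp add: d_def field_simps\<close>)
      have "(\<lambda>n. cdf (M n) x) \<longlonglongrightarrow> 0"
      proof (rule tendsto_sandwich[where f = "\<lambda>n. 0" and h = "\<lambda>n. V n / d^2"])
        show "eventually (\<lambda>n. 0 \<le> cdf (M n) x) sequentially"
          by (simp add: cdf_def)
        show "eventually (\<lambda>n. cdf (M n) x \<le> V n / d^2) sequentially"
          using ev
        proof eventually_elim
          case (elim n)
          show ?case unfolding cdf_def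
            by (rule cheb[OF d]) (use elim in auto)
        qed
        show "(\<lambda>n. V n / d^2) \<longlonglongrightarrow> 0"
          using tendsto_divide[OF Vconv tendsto_const[of "d^2"]] d by simp
      qed simp
      then show ?thesis using 1 by (simp add: cdfret)
    next
      case 2
      define d where "d = (x - c) / 2"
      have d: "d > 0" using 2 by (simp add: d_def)
      have ev: "eventually (\<lambda>n. p n < x - d) sequentially"
        by (rule order_tendstoD(2)[OF pconv]) (use 2 in \<open>simp add: d_def field_simps\<close>)
      have compl: "cdf (M n) x = 1 - measure (M n) {x<..}" for n
      proof -
        interpret P: prob_space "M n" by (rule Mps)
        have "sets (M n) = sets borel" by (simp add: M_def)
        then have "measure (M n) (space (M n) - {x<..}) = 1 - measure (M n) {x<..}"
          by (intro P.prob_compl) simp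
        moreover have "space (M n) - {x<..} = {..x}" by (auto simp: M_def)
        ultimately show ?thesis by (simp add: cdf_def)
      qed
      have "(\<lambda>n. cdf (M n) x) \<longlonglongrightarrow> 1"
      proof (rule tendsto_sandwich[where f = "\<lambda>n. 1 - V n / d^2" and h = "\<lambda>n. 1"])
        show "eventually (\<lambda>n. cdf (M n) x \<le> 1) sequentially"
        proof (intro always_eventually allI)
          fix n
          interpret P: prob_space "M n" by (rule Mps)
          show "cdf (M n) x \<le> 1" unfolding cdf_def by (rule P.prob_le_1)
        qed
        show "eventually (\<lambda>n. 1 - V n / d^2 \<le> cdf (M n) x) sequentially"
          using ev
        proof eventually_elim
          case (elim n)
          have "measure (M n) {x<..} \<le> V n / d^2"
            by (rule cheb[OF d]) (use elim in auto)
          then show ?case unfolding compl by simp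
        qed
        show "(\<lambda>n. 1 - V n / d^2) \<longlonglongrightarrow> 1"
          using tendsto_diff[OF tendsto_const[of 1] tendsto_divide[OF Vconv tendsto_const[of "d^2"]]] d by simp
      qed simp
      then show ?thesis using 2 by (simp add: cdfret)
    qed
  qed
qed


end
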